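(* Let $\mathcal{F}=(W,\preceq,\mathcal{V})$ be a finite poset model and $w_1,w_2\in W$. Then $w_1\equiv_\eta w_2$ if and only if $w_1\approx_\pm w_2$.
   Context: Fix a set PL of proposition letters. A poset model is $\mathcal{F}=(W,\preceq,\mathcal{V})$ with $(W,\preceq)$ a partial order and $\mathcal{V}:\mathrm{PL}\to\mathcal{P}(W)$. $[m;n]=\{i\in\mathbb{N}:m\le i\le n\}$, $[m;n)=\{i:m\le i<n\}$. An undirected path of length $\ell$ from $w$ is $\pi:[0;\ell]\to W$ with $\pi(0)=w$ and, for each $i\in[0;\ell)$, $\pi(i)\preceq\pi(i+1)$ or $\pi(i+1)\preceq\pi(i)$. A $\downarrow$-path is an undirected path of length $\ell\ge1$ with $\pi(\ell)\preceq\pi(\ell-1)$. A $\pm$-path is a $\downarrow$-path of length $\ell\ge2$ with $\pi(0)\preceq\pi(1)$. SLCS$_\eta$ formulas: $\Phi::=p\mid\neg\Phi\mid\Phi_1\wedge\Phi_2\mid\eta(\Phi_1,\Phi_2)$; $w\models p$ iff $w\in\mathcal{V}(p)$; negation, conjunction standard; $w\models\eta(\Phi_1,\Phi_2)$ iff some $\pm$-path $\pi:[0;\ell]\to W$ from $w$ has $\pi(\ell)\models\Phi_2$ and $\pi(i)\models\Phi_1$ for all $i\in[0;\ell)$. $w_1\equiv_\eta w_2$ means $w_1,w_2$ satisfy the same SLCS$_\eta$ formulas. A weak $\pm$-bisimulation is a symmetric relation $B\subseteq W\times W$ such that whenever $B(w_1,w_2)$: (1) for every $p$, $w_1\in\mathcal{V}(p)$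 iff $w_2\in\mathcal{V}(p)$; (2) for all $u_1,d_1\in W$ with ($w_1\preceq u_1$ or $u_1\preceq w_1$) and $d_1\preceq u_1$, there is a $\pm$-path $\pi_2:[0;\ell_2]\to W$ from $w_2$ with $B(d_1,\pi_2(\ell_2))$ and, for all $j\in[0;\ell_2)$, $B(w_1,\pi_2(j))$ or $B(u_1,\pi_2(j))$. $w_1\approx_\pm w_2$ iff some weak $\pm$-bisimulation contains $(w_1,w_2)$. *)

theory Defs
  imports Main
begin

definition poset_model :: "'w set \<Rightarrow> ('w \<Rightarrow> 'w \<Rightarrow> bool) \<Rightarrow> ('p \<Rightarrow> 'w set) \<Rightarrow> bool" where
  "poset_model W le V \<longleftrightarrow>
     (\<forall>x\<in>W. le x x) \<and>
     (\<forall>x\<in>W. \<forall>y\<in>W. le x y \<and> le y x \<longrightarrow> x = y) \<and>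
     (\<forall>x\<in>W. \<forall>y\<in>W. \<forall>z\<in>W. le x y \<and> le y z \<longrightarrow> le x z) \<and>
     (\<forall>p. V p \<subseteq> W)"

datatype 'p slcs_eta =
    Prop 'p
  | Neg "'p slcs_eta"
  | Conj "'p slcs_eta" "'p slcs_eta"
  | Eta "'p slcs_eta" "'p slcs_eta"

definition undirected_path :: "'w set \<Rightarrow> ('w \<Rightarrow> 'w \<Rightarrow> bool) \<Rightarrow> (nat \<Rightarrow> 'w) \<Rightarrow> nat \<Rightarrow> 'w \<Rightarrow> bool" where
  "undirected_path W le \<pi> l w \<longleftrightarrow>
     (\<forall>i\<le>l. \<pi> i \<in> W) \<and> \<pi> 0 = w \<and>
     (\<forall>i<l. le (\<pi> i) (\<pi> (Suc i)) \<or> le (\<pi> (Suc i)) (\<pi> i))"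

definition down_path :: "'w set \<Rightarrow> ('w \<Rightarrow> 'w \<Rightarrow> bool) \<Rightarrow> (nat \<Rightarrow> 'w) \<Rightarrow> nat \<Rightarrow> 'w \<Rightarrow> bool" where
  "down_path W le \<pi> l w \<longleftrightarrow>
     undirected_path W le \<pi> l w \<and> l \<ge> 1 \<and> le (\<pi> l) (\<pi> (l - 1))"

definition pm_path :: "'w set \<Rightarrow> ('w \<Rightarrow> 'w \<Rightarrow> bool) \<Rightarrow> (nat \<Rightarrow> 'w) \<Rightarrow> nat \<Rightarrow> 'w \<Rightarrow> bool" where
  "pm_path W le \<pi> l w \<longleftrightarrow>
     down_path W le \<pi> l w \<and> l \<ge> 2 \<and> le (\<pi> 0) (\<pi> 1)"

fun sat :: "'w set \<Rightarrow> ('w \<Rightarrow> 'w \<Rightarrow> bool) \<Rightarrow> ('p \<Rightarrow> 'w set) \<Rightarrow> 'w \<Rightarrow> 'p slcs_eta \<Rightarrow> bool" where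
  "sat W le V w (Prop p) \<longleftrightarrow> w \<in> V p"
| "sat W le V w (Neg \<Phi>) \<longleftrightarrow> \<not> sat W le V w \<Phi>"
| "sat W le V w (Conj \<Phi>1 \<Phi>2) \<longleftrightarrow> sat W le V w \<Phi>1 \<and> sat W le V w \<Phi>2"
| "sat W le V w (Eta \<Phi>1 \<Phi>2) \<longleftrightarrow>
     (\<exists>\<pi> l. pm_path W le \<pi> l w \<and> sat W le V (\<pi> l) \<Phi>2 \<and> (\<forall>i<l. sat W le V (\<pi> i) \<Phi>1))"

definition eta_equiv :: "'w set \<Rightarrow> ('w \<Rightarrow> 'w \<Rightarrow> bool) \<Rightarrow> ('p \<Rightarrow> 'w set) \<Rightarrow> 'w \<Rightarrow> 'w \<Rightarrow> bool" where
  "eta_equiv W le V w1 w2 \<longleftrightarrow> (\<forall>\<Phi>. sat W le V w1 \<Phi> \<longleftrightarrow> sat W le V w2 \<Phi>)"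

definition weak_pm_bisim :: "'w set \<Rightarrow> ('w \<Rightarrow> 'w \<Rightarrow> bool) \<Rightarrow> ('p \<Rightarrow> 'w set) \<Rightarrow> ('w \<Rightarrow> 'w \<Rightarrow> bool) \<Rightarrow> bool" where
  "weak_pm_bisim W le V B \<longleftrightarrow>
     (\<forall>x y. B x y \<longrightarrow> x \<in> W \<and> y \<in> W) \<and>
     (\<forall>x y. B x y \<longrightarrow> B y x) \<and>
     (\<forall>w1 w2. B w1 w2 \<longrightarrow>
        (\<forall>p. w1 \<in> V p \<longleftrightarrow> w2 \<in> V p) \<and>
        (\<forall>u1\<in>W. \<forall>d1\<in>W. (le w1 u1 \<or> le u1 w1) \<and> le d1 u1 \<longrightarrow>
           (\<exists>\<pi>2 l2. pm_path W le \<pi>2 l2 w2 \<and> B d1 (\<pi>2 l2) \<and>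
              (\<forall>j<l2. B w1 (\<pi>2 j) \<or> B u1 (\<pi>2 j)))))"

definition weak_pm_bisimilar :: "'w set \<Rightarrow> ('w \<Rightarrow> 'w \<Rightarrow> bool) \<Rightarrow> ('p \<Rightarrow> 'w set) \<Rightarrow> 'w \<Rightarrow> 'w \<Rightarrow> bool" where
  "weak_pm_bisimilar W le V w1 w2 \<longleftrightarrow> (\<exists>B. weak_pm_bisim W le V B \<and> B w1 w2)"

end

theory Submission
  imports Defs
begin

definition good :: "'w set \<Rightarrow> ('w \<Rightarrow> 'w \<Rightarrow> bool) \<Rightarrow> ('p \<Rightarrow> 'w set) \<Rightarrow> 'p slcs_eta \<Rightarrow> 'w \<Rightarrow> 'w \<Rightarrow> bool" where
  "good W le V F y z \<longleftrightarrow> (\<exists>\<pi> l. pm_path W le \<pi> l y \<and> \<pi> l = z \<and> (\<forall>i<l. sat W le V (\<pi> i) F))"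

lemma good_concat:
  assumes "good W le V F y z" "good W le V F z z'"
  shows "good W le V F y z'"
proof -
  obtain \<pi>1 l1 where p1: "pm_path W le \<pi>1 l1 y" "\<pi>1 l1 = z" "\<forall>i<l1. sat W le V (\<pi>1 i) F"
    using assms(1) unfolding good_def by blast
  obtain \<pi>2 l2 where p2: "pm_path W le \<pi>2 l2 z" "\<pi>2 l2 = z'" "\<forall>i<l2. sat W le V (\<pi>2 i) F"
    using assms(2) unfolding good_def by blast
  define \<pi> where "\<pi> = (\<lambda>i. if i \<le> l1 then \<pi>1 i else \<pi>2 (i - l1))"
  have e: "\<And>i. i \<ge> l1 \<Longrightarrow> \<pi> i = \<pi>2 (i - l1)"
    using p1(2) p2(1) unfolding \<pi>_def pm_path_def down_path_def undirected_path_def by auto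
  have l1: "l1 \<ge> 2" "l2 \<ge> 2" using p1(1) p2(1) unfolding pm_path_def by auto
  have "pm_path W le \<pi> (l1 + l2) y"
    unfolding pm_path_def down_path_def undirected_path_def
  proof (intro conjI allI impI)
    fix i assume "i \<le> l1 + l2"
    then show "\<pi> i \<in> W"
      using p1(1) p2(1) e[of i] unfolding pm_path_def down_path_def undirected_path_def \<pi>_def
      by (cases "i \<le> l1") auto
  next
    show "\<pi> 0 = y" using p1(1) unfolding \<pi>_def pm_path_def down_path_def undirected_path_def by auto
  next
    fix i assume i: "i < l1 + l2"
    show "le (\<pi> i) (\<pi> (Suc i)) \<or> le (\<pi> (Suc i)) (\<pi> i)"
    proof (cases "i < l1")
      case True
      then show ?thesis using p1(1) unfolding \<pi>_def pm_path_def down_path_def undirected_path_def by auto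
    next
      case False
      then have "\<pi> i = \<pi>2 (i - l1)" "\<pi> (Suc i) = \<pi>2 (Suc (i - l1))" "i - l1 < l2"
        using e[of i] e[of "Suc i"] i by (auto simp: Suc_diff_le)
      then show ?thesis using p2(1) unfolding pm_path_def down_path_def undirected_path_def by auto
    qed
  next
    show "1 \<le> l1 + l2" using l1 by auto
  next
    have "\<pi> (l1 + l2) = \<pi>2 l2" "\<pi> (l1 + l2 - 1) = \<pi>2 (l2 - 1)" using e[of "l1+l2"] e[of "l1+l2-1"] l1 by auto
    then show "le (\<pi> (l1 + l2)) (\<pi> (l1 + l2 - 1))" using p2(1) unfolding pm_path_def down_path_def by auto
  next
    show "2 \<le> l1 + l2" using l1 by auto
  next
    show "le (\<pi> 0) (\<pi> 1)" using p1(1) l1 unfolding \<pi>_def pm_path_def by auto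
  qed
  moreover have "\<pi> (l1 + l2) = z'" using e[of "l1+l2"] p2(2) by auto
  moreover have "\<forall>i<l1+l2. sat W le V (\<pi> i) F"
  proof (intro allI impI)
    fix i assume i: "i < l1 + l2"
    show "sat W le V (\<pi> i) F"
    proof (cases "i < l1")
      case True then show ?thesis using p1(3) unfolding \<pi>_def by auto
    next
      case False then show ?thesis using e[of i] p2(3) i by auto
    qed
  qed
  ultimately show ?thesis unfolding good_def by blast
qed

lemma step_lemma:
  assumes bis: "weak_pm_bisim W le V B"
    and IH: "\<And>x y. B x y \<Longrightarrow> sat W le V x F \<longleftrightarrow> sat W le V y F"
    and "B a b" "u \<in> W" "d \<in> W" "le a u \<or> le u a" "le d u" "sat W le V a F" "sat W le V u F"
  shows "\<exists>z. B d z \<and> good W le V F b z"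
proof -
  from bis assms(3) have "\<forall>u1\<in>W. \<forall>d1\<in>W. (le a u1 \<or> le u1 a) \<and> le d1 u1 \<longrightarrow>
           (\<exists>\<pi>2 l2. pm_path W le \<pi>2 l2 b \<and> B d1 (\<pi>2 l2) \<and>
              (\<forall>j<l2. B a (\<pi>2 j) \<or> B u1 (\<pi>2 j)))"
    unfolding weak_pm_bisim_def by blast
  then obtain \<pi>2 l2 where p: "pm_path W le \<pi>2 l2 b" "B d (\<pi>2 l2)" "\<forall>j<l2. B a (\<pi>2 j) \<or> B u (\<pi>2 j)"
    using assms by blast
  have "\<forall>j<l2. sat W le V (\<pi>2 j) F" using p(3) IH assms(8,9) by blast
  then show ?thesis using p unfolding good_def by blast
qed

lemma eta_transfer:
  assumes pm: "poset_model W le V"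
    and bis: "weak_pm_bisim W le V B"
    and IH1: "\<And>x y. B x y \<Longrightarrow> sat W le V x F1 \<longleftrightarrow> sat W le V y F1"
    and IH2: "\<And>x y. B x y \<Longrightarrow> sat W le V x F2 \<longleftrightarrow> sat W le V y F2"
    and Bxy: "B x y" and sx: "sat W le V x (Eta F1 F2)"
  shows "sat W le V y (Eta F1 F2)"
proof -
  obtain \<pi> l where p: "pm_path W le \<pi> l x" "sat W le V (\<pi> l) F2" "\<forall>i<l. sat W le V (\<pi> i) F1"
    using sx by auto
  have inW: "\<And>i. i \<le> l \<Longrightarrow> \<pi> i \<in> W" and p0: "\<pi> 0 = x"
    and st: "\<And>i. i < l \<Longrightarrow> le (\<pi> i) (\<pi> (Suc i)) \<or> le (\<pi> (Suc i)) (\<pi> i)"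
    and lst: "le (\<pi> l) (\<pi> (l - 1))" and l2: "l \<ge> 2"
    using p(1) unfolding pm_path_def down_path_def undirected_path_def by auto
  have refl: "\<And>a. a \<in> W \<Longrightarrow> le a a" using pm unfolding poset_model_def by auto
  have one: "\<exists>z'. B (\<pi> (Suc i)) z' \<and> good W le V F1 z z'" if i: "i < l" and Bz: "B (\<pi> i) z" for i z
  proof (cases "le (\<pi> (Suc i)) (\<pi> i)")
    case True
    show ?thesis
      by (rule step_lemma[OF bis IH1 Bz]) (use i inW refl True p(3) in auto)
  next
    case False
    then have up: "le (\<pi> i) (\<pi> (Suc i))" using st i by blast
    have "Suc i \<noteq> l" using False lst by auto
    then have "Suc i < l" using i by auto
    have si: "Suc i < l" using i \<open>Suc i \<noteq> l\<close> by auto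
    show ?thesis
      by (rule step_lemma[OF bis IH1 Bz, of "\<pi> (Suc i)" "\<pi> (Suc i)"]) (use si inW refl up p(3) in auto)
  qed
  have claim: "\<exists>z. B (\<pi> k) z \<and> good W le V F1 y z" if "1 \<le> k" "k \<le> l" for k
    using that
  proof (induction k)
    case 0 then show ?case by simp
  next
    case (Suc k)
    show ?case
    proof (cases "k = 0")
      case True
      then show ?thesis using one[of 0 y] Bxy p0 l2 by auto
    next
      case False
      then obtain z where z: "B (\<pi> k) z" "good W le V F1 y z" using Suc by auto
      obtain z' where "B (\<pi> (Suc k)) z'" "good W le V F1 z z'" using one[of k z] z Suc.prems by auto
      then show ?thesis using good_concat[OF z(2)] by blast
    qed
  qed
  obtain z where z: "B (\<pi> l) z" "good W le V F1 y z" using claim[of l] l2 by auto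
  have "sat W le V z F2" using IH2[OF z(1)] p(2) by simp
  then show ?thesis using z(2) unfolding good_def by auto
qed

lemma bisim_sat:
  assumes pm: "poset_model W le V" and bis: "weak_pm_bisim W le V B"
  shows "B x y \<Longrightarrow> sat W le V x F \<longleftrightarrow> sat W le V y F"
proof (induction F arbitrary: x y)
  case (Prop p)
  then show ?case using bis unfolding weak_pm_bisim_def by auto
next
  case (Neg F) then show ?case by auto
next
  case (Conj F1 F2) then show ?case by auto
next
  case (Eta F1 F2)
  have sym: "B y x" using Eta.prems bis unfolding weak_pm_bisim_def by blast
  show ?case
    using eta_transfer[OF pm bis Eta.IH(1) Eta.IH(2) Eta.prems]
      eta_transfer[OF pm bis Eta.IH(1) Eta.IH(2) sym] by blast
qed

definition Or_f where "Or_f a b = Neg (Conj (Neg a) (Neg b))"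

lemma sat_Or[simp]: "sat W le V x (Or_f a b) \<longleftrightarrow> sat W le V x a \<or> sat W le V x b"
  unfolding Or_f_def by simp

lemma char_aux:
  assumes "finite S"
  shows "\<exists>\<chi>. sat W le V x \<chi> \<and> (\<forall>z\<in>S. \<not> eta_equiv W le V x z \<longrightarrow> \<not> sat W le V z \<chi>)"
  using assms
proof (induction S rule: finite_induct)
  case empty
  show ?case by (rule exI[of _ "Neg (Conj (Prop undefined) (Neg (Prop undefined)))"]) auto
next
  case (insert a S)
  then obtain \<chi> where c: "sat W le V x \<chi>" "\<forall>z\<in>S. \<not> eta_equiv W le V x z \<longrightarrow> \<not> sat W le V z \<chi>" by blast
  show ?case
  proof (cases "eta_equiv W le V x a")
    case True then show ?thesis using c by auto
  next
    case False
    then obtain \<Phi> where "\<not> (sat W le V x \<Phi> \<longleftrightarrow> sat W le V a \<Phi>)" unfolding eta_equiv_def by blast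
    then obtain \<delta> where d: "sat W le V x \<delta>" "\<not> sat W le V a \<delta>"
      by (cases "sat W le V x \<Phi>") (auto, metis sat.simps(2))
    show ?thesis using c d by (intro exI[of _ "Conj \<chi> \<delta>"]) auto
  qed
qed

lemma char_formula:
  assumes "finite W"
  shows "\<exists>\<chi>. \<forall>z\<in>W. sat W le V z \<chi> \<longleftrightarrow> eta_equiv W le V x z"
proof -
  obtain \<chi> where c: "sat W le V x \<chi>" "\<forall>z\<in>W. \<not> eta_equiv W le V x z \<longrightarrow> \<not> sat W le V z \<chi>"
    using char_aux[OF assms] by blast
  show ?thesis
  proof (intro exI[of _ \<chi>] ballI)
    fix z assume "z \<in> W"
    then show "sat W le V z \<chi> \<longleftrightarrow> eta_equiv W le V x z"
      using c unfolding eta_equiv_def by blast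
  qed
qed

lemma equiv_bisim:
  assumes pm: "poset_model W le V" and fin: "finite W"
  shows "weak_pm_bisim W le V (\<lambda>x y. x \<in> W \<and> y \<in> W \<and> eta_equiv W le V x y)"
proof -
  have A: "\<forall>x y. (x \<in> W \<and> y \<in> W \<and> eta_equiv W le V x y) \<longrightarrow> (y \<in> W \<and> x \<in> W \<and> eta_equiv W le V y x)"
    unfolding eta_equiv_def by auto
  have P: "\<forall>w1 w2 p. (w1 \<in> W \<and> w2 \<in> W \<and> eta_equiv W le V w1 w2) \<longrightarrow> (w1 \<in> V p \<longleftrightarrow> w2 \<in> V p)"
  proof (intro allI impI)
    fix w1 w2 p assume "w1 \<in> W \<and> w2 \<in> W \<and> eta_equiv W le V w1 w2"
    then have "sat W le V w1 (Prop p) = sat W le V w2 (Prop p)" unfolding eta_equiv_def by blast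
    then show "w1 \<in> V p \<longleftrightarrow> w2 \<in> V p" by simp
  qed
  have C: "\<forall>w1 w2. (w1 \<in> W \<and> w2 \<in> W \<and> eta_equiv W le V w1 w2) \<longrightarrow> (\<forall>u1\<in>W. \<forall>d1\<in>W. (le w1 u1 \<or> le u1 w1) \<and> le d1 u1 \<longrightarrow>
           (\<exists>\<pi>2 l2. pm_path W le \<pi>2 l2 w2 \<and> (d1 \<in> W \<and> \<pi>2 l2 \<in> W \<and> eta_equiv W le V d1 (\<pi>2 l2)) \<and>
              (\<forall>j<l2. (w1 \<in> W \<and> \<pi>2 j \<in> W \<and> eta_equiv W le V w1 (\<pi>2 j)) \<or> (u1 \<in> W \<and> \<pi>2 j \<in> W \<and> eta_equiv W le V u1 (\<pi>2 j)))))"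
  proof (intro allI impI ballI)
  fix w1 w2 u1 d1
  assume B: "w1 \<in> W \<and> w2 \<in> W \<and> eta_equiv W le V w1 w2" and u: "u1 \<in> W" and d: "d1 \<in> W"
    and r: "(le w1 u1 \<or> le u1 w1) \<and> le d1 u1"
  have refl: "\<And>a. a \<in> W \<Longrightarrow> le a a" using pm unfolding poset_model_def by auto
  obtain ca where ca: "\<forall>z\<in>W. sat W le V z ca \<longleftrightarrow> eta_equiv W le V w1 z" using char_formula[OF fin] by blast
  obtain cb where cb: "\<forall>z\<in>W. sat W le V z cb \<longleftrightarrow> eta_equiv W le V u1 z" using char_formula[OF fin] by blast
  obtain cd where cd: "\<forall>z\<in>W. sat W le V z cd \<longleftrightarrow> eta_equiv W le V d1 z" using char_formula[OF fin] by blast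
  have eqr: "\<And>a. eta_equiv W le V a a" unfolding eta_equiv_def by auto
  have w1W: "w1 \<in> W" using B by auto
  have "sat W le V w1 (Eta (Or_f ca cb) cd)"
  proof (cases "le w1 u1")
    case True
    define \<pi> where "\<pi> = (\<lambda>i::nat. if i = 0 then w1 else if i = 1 then u1 else d1)"
    have "pm_path W le \<pi> 2 w1"
      unfolding pm_path_def down_path_def undirected_path_def \<pi>_def
      using True r w1W u d by (auto simp: less_Suc_eq)
    moreover have "sat W le V (\<pi> 2) cd" using cd d eqr unfolding \<pi>_def by auto
    moreover have "\<forall>i<2. sat W le V (\<pi> i) (Or_f ca cb)"
      using ca cb w1W u eqr unfolding \<pi>_def by (auto simp: less_Suc_eq)
    ultimately show ?thesis by auto
  next
    case False
    then have uw: "le u1 w1" using r by auto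
    define \<pi> where "\<pi> = (\<lambda>i::nat. if i \<le> 1 then w1 else if i = 2 then u1 else d1)"
    have "pm_path W le \<pi> 3 w1"
      unfolding pm_path_def down_path_def undirected_path_def \<pi>_def
      using uw r w1W u d refl by (auto simp: less_Suc_eq)
    moreover have "sat W le V (\<pi> 3) cd" using cd d eqr unfolding \<pi>_def by auto
    moreover have "\<forall>i<3. sat W le V (\<pi> i) (Or_f ca cb)"
      using ca cb w1W u eqr unfolding \<pi>_def by (auto simp: less_Suc_eq)
    ultimately show ?thesis by auto
  qed
  then have "sat W le V w2 (Eta (Or_f ca cb) cd)" using B unfolding eta_equiv_def by blast
  then obtain \<pi> l where p: "pm_path W le \<pi> l w2" "sat W le V (\<pi> l) cd" "\<forall>i<l. sat W le V (\<pi> i) (Or_f ca cb)"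
    by auto
  have inW: "\<And>i. i \<le> l \<Longrightarrow> \<pi> i \<in> W" using p(1) unfolding pm_path_def down_path_def undirected_path_def by auto
  have "d1 \<in> W \<and> \<pi> l \<in> W \<and> eta_equiv W le V d1 (\<pi> l)" using p(2) cd d inW[of l] by auto
  moreover have "\<forall>j<l. (w1 \<in> W \<and> \<pi> j \<in> W \<and> eta_equiv W le V w1 (\<pi> j)) \<or>
                       (u1 \<in> W \<and> \<pi> j \<in> W \<and> eta_equiv W le V u1 (\<pi> j))"
    using p(3) ca cb inW w1W u by auto
  ultimately show "\<exists>\<pi>2 l2. pm_path W le \<pi>2 l2 w2 \<and>
            (d1 \<in> W \<and> \<pi>2 l2 \<in> W \<and> eta_equiv W le V d1 (\<pi>2 l2)) \<and>
            (\<forall>j<l2. (w1 \<in> W \<and> \<pi>2 j \<in> W \<and> eta_equiv W le V w1 (\<pi>2 j)) \<or>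
                    (u1 \<in> W \<and> \<pi>2 j \<in> W \<and> eta_equiv W le V u1 (\<pi>2 j)))"
    using p(1) by blast
qed
  show ?thesis unfolding weak_pm_bisim_def using A P C by blast
qed

theorem theorem3:
  fixes W :: "'w set" and le :: "'w \<Rightarrow> 'w \<Rightarrow> bool" and V :: "'p \<Rightarrow> 'w set"
  assumes "poset_model W le V" and "finite W"
    and "w1 \<in> W" and "w2 \<in> W"
  shows "eta_equiv W le V w1 w2 \<longleftrightarrow> weak_pm_bisimilar W le V w1 w2"
proof
  assume "eta_equiv W le V w1 w2"
  then show "weak_pm_bisimilar W le V w1 w2"
    using equiv_bisim[OF assms(1,2)] assms(3,4) unfolding weak_pm_bisimilar_def by blast
next
  assume "weak_pm_bisimilar W le V w1 w2"
  then obtain B where "weak_pm_bisim W le V B" "B w1 w2" unfolding weak_pm_bisimilar_def by blast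
  then show "eta_equiv W le V w1 w2"
    using bisim_sat[OF assms(1)] unfolding eta_equiv_def by blast
qed

end
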